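(* Let $F:\mathbb T^d\to\mathbb R^d$ and $u_0:\mathbb T^d\to[0,1]$ be $C^\infty$, and let $u$ be the solution of $\partial_tu=\Delta u-2\nabla\cdot(u(1-u)F)$ with $u(0,\cdot)=u_0$. Assume there exists $\varepsilon_0>0$ such that $\varepsilon_0\le u_0(x)\le1-\varepsilon_0$ for all $x\in\mathbb T^d$. Then for any $T>0$ there exists $\varepsilon_1>0$, depending only on $T$, $F$ and $\varepsilon_0$, such that $\varepsilon_1\le u(t,x)\le1-\varepsilon_1$ for all $x\in\mathbb T^d$ and $t\in[0,T]$.
   Context: $\mathbb T^d=\mathbb R^d/\mathbb Z^d$. *)

theory Defs
  imports "HOL-Analysis.Analysis"
begin

text \<open>The torus T^d = R^d / Z^d is modelled by Z^d-periodic functions on real^'n,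
  where the finite type 'n indexes the d coordinates.\<close>

definition torus_periodic :: "(real^'n \<Rightarrow> 'b) \<Rightarrow> bool" where
  "torus_periodic f \<longleftrightarrow> (\<forall>x i. f (x + axis i 1) = f x)"

definition partial :: "'n \<Rightarrow> (real^'n \<Rightarrow> 'b::real_normed_vector) \<Rightarrow> real^'n \<Rightarrow> 'b" where
  "partial i f x = vector_derivative (\<lambda>s. f (x + s *\<^sub>R axis i 1)) (at 0)"

definition has_partial :: "'n \<Rightarrow> (real^'n \<Rightarrow> 'b::real_normed_vector) \<Rightarrow> real^'n \<Rightarrow> bool" where
  "has_partial i f x \<longleftrightarrow> (\<lambda>s. f (x + s *\<^sub>R axis i 1)) differentiable (at 0)"

fun iter_partial :: "'n list \<Rightarrow> (real^'n \<Rightarrow> 'b::real_normed_vector) \<Rightarrow> real^'n \<Rightarrow> 'b" where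
  "iter_partial [] f = f"
| "iter_partial (i # is) f = partial i (iter_partial is f)"

definition smooth :: "(real^'n \<Rightarrow> 'b::real_normed_vector) \<Rightarrow> bool" where
  "smooth f \<longleftrightarrow> (\<forall>is. continuous_on UNIV (iter_partial is f) \<and>
                        (\<forall>i x. has_partial i (iter_partial is f) x))"

definition classical_solution ::
  "(real^'n \<Rightarrow> real^'n) \<Rightarrow> (real^'n \<Rightarrow> real) \<Rightarrow> (real \<Rightarrow> real^'n \<Rightarrow> real) \<Rightarrow> bool" where
  "classical_solution F u0 u \<longleftrightarrow>
     continuous_on ({0..} \<times> UNIV) (\<lambda>(t,x). u t x)
   \<and> (\<forall>x. u 0 x = u0 x)
   \<and> (\<forall>t\<ge>0. torus_periodic (u t))
   \<and> (\<forall>t>0. \<forall>x. (\<lambda>s. u s x) differentiable (at t))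
   \<and> (\<forall>t>0. \<forall>x i j. has_partial i (u t) x \<and> has_partial j (partial i (u t)) x)
   \<and> continuous_on ({0<..} \<times> UNIV) (\<lambda>(t,x). vector_derivative (\<lambda>s. u s x) (at t))
   \<and> (\<forall>i. continuous_on ({0<..} \<times> UNIV) (\<lambda>(t,x). partial i (u t) x))
   \<and> (\<forall>i j. continuous_on ({0<..} \<times> UNIV) (\<lambda>(t,x). partial j (partial i (u t)) x))
   \<and> (\<forall>t>0. \<forall>x. vector_derivative (\<lambda>s. u s x) (at t) =
          (\<Sum>i\<in>UNIV. partial i (partial i (u t)) x)
          - 2 * (\<Sum>i\<in>UNIV. partial i (\<lambda>y. u t y * (1 - u t y) * F y $ i) x))"

end

theory Submission
  imports Defs
begin


lemma hp_vd:
  assumes "has_partial i f x"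
  shows "((\<lambda>s. f (x + s *\<^sub>R axis i 1)) has_vector_derivative partial i f x) (at 0)"
  using assms unfolding has_partial_def partial_def
  using vector_derivative_works by blast

lemma hp_real:
  fixes f :: "real^'n \<Rightarrow> real"
  assumes "has_partial i f x"
  shows "((\<lambda>s. f (x + s *\<^sub>R axis i 1)) has_field_derivative partial i f x) (at 0)"
  using hp_vd[OF assms] by (simp add: has_real_derivative_iff_has_vector_derivative)

lemma hp_shift:
  fixes f :: "real^'n \<Rightarrow> real"
  assumes "has_partial i f (x + s *\<^sub>R axis i 1)"
  shows "((\<lambda>r. f (x + r *\<^sub>R axis i 1)) has_field_derivative partial i f (x + s *\<^sub>R axis i 1)) (at s)"
proof -
  have "((\<lambda>r. f (x + (r + s) *\<^sub>R axis i 1)) has_field_derivative partial i f (x + s *\<^sub>R axis i 1)) (at 0)"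
    using hp_real[OF assms] by (simp add: scaleR_add_left algebra_simps)
  then show ?thesis using DERIV_shift[of "\<lambda>r. f (x + r *\<^sub>R axis i 1)" _ 0 s] by simp
qed

lemma min_partial:
  fixes f :: "real^'n \<Rightarrow> real"
  assumes "has_partial i f x" "\<forall>y. f x \<le> f y"
  shows "partial i f x = 0"
  using DERIV_local_min[OF hp_real[OF assms(1)], of 1] assms(2) by auto

lemma max_partial:
  fixes f :: "real^'n \<Rightarrow> real"
  assumes "has_partial i f x" "\<forall>y. f y \<le> f x"
  shows "partial i f x = 0"
  using DERIV_local_max[OF hp_real[OF assms(1)], of 1] assms(2) by auto

lemma min_partial2:
  fixes f :: "real^'n \<Rightarrow> real"
  assumes h1: "\<forall>y. has_partial i f y" and h2: "has_partial i (partial i f) x"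
    and mn: "\<forall>y. f x \<le> f y"
  shows "partial i (partial i f) x \<ge> 0"
proof (rule ccontr)
  assume "\<not> ?thesis"
  hence neg: "partial i (partial i f) x < 0" by simp
  have p0: "partial i f x = 0" using min_partial h1 mn by blast
  have "((\<lambda>s. partial i f (x + s *\<^sub>R axis i 1)) has_field_derivative partial i (partial i f) x) (at 0)"
    using hp_real[OF h2] .
  from DERIV_neg_dec_right[OF this neg] obtain d where d: "d > 0"
    "\<forall>h>0. h < d \<longrightarrow> partial i f (x + h *\<^sub>R axis i 1) < 0"
    using p0 by auto
  define g where "g = (\<lambda>r. f (x + r *\<^sub>R axis i 1))"
  have dg: "\<And>r. (g has_field_derivative partial i f (x + r *\<^sub>R axis i 1)) (at r)"
    unfolding g_def using hp_shift h1 by blast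
  obtain z where z: "z > 0" "z < d/2" "g (d/2) - g 0 = (d/2 - 0) * partial i f (x + z *\<^sub>R axis i 1)"
    using MVT2[of 0 "d/2" g "\<lambda>r. partial i f (x + r *\<^sub>R axis i 1)"] dg d(1) by auto
  have "partial i f (x + z *\<^sub>R axis i 1) < 0" using d z by auto
  hence "g (d/2) < g 0" using z d(1) by (smt (verit) mult_pos_neg)
  moreover have "g 0 \<le> g (d/2)" unfolding g_def using mn by simp
  ultimately show False by simp
qed

lemma max_partial2:
  fixes f :: "real^'n \<Rightarrow> real"
  assumes h1: "\<forall>y. has_partial i f y" and h2: "has_partial i (partial i f) x"
    and mx: "\<forall>y. f y \<le> f x"
  shows "partial i (partial i f) x \<le> 0"
proof (rule ccontr)
  assume "\<not> ?thesis"
  hence pos: "partial i (partial i f) x > 0" by simp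
  have p0: "partial i f x = 0" using max_partial h1 mx by blast
  have "((\<lambda>s. partial i f (x + s *\<^sub>R axis i 1)) has_field_derivative partial i (partial i f) x) (at 0)"
    using hp_real[OF h2] .
  from DERIV_pos_inc_right[OF this pos] obtain d where d: "d > 0"
    "\<forall>h>0. h < d \<longrightarrow> partial i f (x + h *\<^sub>R axis i 1) > 0"
    using p0 by auto
  define g where "g = (\<lambda>r. f (x + r *\<^sub>R axis i 1))"
  have dg: "\<And>r. (g has_field_derivative partial i f (x + r *\<^sub>R axis i 1)) (at r)"
    unfolding g_def using hp_shift h1 by blast
  obtain z where z: "z > 0" "z < d/2" "g (d/2) - g 0 = (d/2 - 0) * partial i f (x + z *\<^sub>R axis i 1)"
    using MVT2[of 0 "d/2" g "\<lambda>r. partial i f (x + r *\<^sub>R axis i 1)"] dg d(1) by auto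
  have "partial i f (x + z *\<^sub>R axis i 1) > 0" using d z by auto
  hence "g (d/2) > g 0" using z d(1) by (smt (verit) mult_pos_pos)
  moreover have "g (d/2) \<le> g 0" unfolding g_def using mx by simp
  ultimately show False by simp
qed



lemma per_nat:
  assumes "torus_periodic f"
  shows "f (x + real n *\<^sub>R axis i 1) = f x"
proof (induction n arbitrary: x)
  case 0 then show ?case by simp
next
  case (Suc n)
  have eq: "x + real (Suc n) *\<^sub>R axis i 1 = (x + real n *\<^sub>R axis i 1) + axis i 1"
    by (simp add: algebra_simps)
  have "f ((x + real n *\<^sub>R axis i 1) + axis i 1) = f (x + real n *\<^sub>R axis i 1)"
    using assms unfolding torus_periodic_def by blast
  then show ?case unfolding eq using Suc by simp
qed

lemma per_int:
  assumes "torus_periodic f"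
  shows "f (x + of_int k *\<^sub>R axis i 1) = f x"
proof (cases "k \<ge> 0")
  case True
  then obtain n where "k = int n" using nonneg_eq_int by blast
  then show ?thesis using per_nat[OF assms, of x n i] by simp
next
  case False
  define n where "n = nat (-k)"
  have n: "k = - int n" using False unfolding n_def by simp
  have eq: "x = (x + of_int k *\<^sub>R axis i 1) + real n *\<^sub>R axis i 1"
    by (simp add: n algebra_simps)
  have "f ((x + of_int k *\<^sub>R axis i 1) + real n *\<^sub>R axis i 1) = f (x + of_int k *\<^sub>R axis i 1)"
    by (rule per_nat[OF assms])
  then show ?thesis using eq by simp
qed
lemma per_sum:
  assumes "torus_periodic f" "finite A"
  shows "f (x - (\<Sum>j\<in>A. of_int (c j) *\<^sub>R axis j 1)) = f x"
  using assms(2)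
proof (induction A)
  case empty then show ?case by simp
next
  case (insert a A)
  have eq: "x - (\<Sum>j\<in>insert a A. of_int (c j) *\<^sub>R axis j 1)
     = (x - (\<Sum>j\<in>A. of_int (c j) *\<^sub>R axis j 1)) + of_int (- c a) *\<^sub>R axis a 1"
    using insert by (simp add: algebra_simps)
  have "f (x - (\<Sum>j\<in>insert a A. of_int (c j) *\<^sub>R axis j 1))
     = f (x - (\<Sum>j\<in>A. of_int (c j) *\<^sub>R axis j 1))"
    unfolding eq by (rule per_int[OF assms(1)])
  then show ?case using insert.IH by simp
qed

lemma per_cube:
  fixes f :: "real^'n \<Rightarrow> 'b"
  assumes "torus_periodic f"
  shows "\<exists>y\<in>cbox 0 (\<chi> i. 1). f y = f x"
proof -
  define y where "y = x - (\<Sum>j\<in>UNIV. of_int (floor (x$j)) *\<^sub>R axis j (1::real))"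
  have "f y = f x" unfolding y_def using per_sum[OF assms] by simp
  moreover have "y$k = x$k - of_int (floor (x$k))" for k
    unfolding y_def by (simp add: axis_def if_distrib cong: if_cong)
  hence "y \<in> cbox 0 (\<chi> i. 1)" 
  proof -
    have "0 \<le> x$k - of_int (floor (x$k)) \<and> x$k - of_int (floor (x$k)) \<le> 1" for k
      using of_int_floor_le[of "x$k"] real_of_int_floor_add_one_gt[of "x$k"] by linarith
    then show ?thesis using \<open>\<And>k. y$k = _\<close> unfolding mem_box_cart by simp
  qed
  ultimately show ?thesis by blast
qed



lemma compare:
  fixes w :: "real \<Rightarrow> real^'n \<Rightarrow> real" and K \<delta> :: real
  assumes cont: "continuous_on ({0..} \<times> UNIV) (\<lambda>(t,x). w t x)"
    and per: "\<forall>t\<ge>0. torus_periodic (w t)"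
    and d: "0 < \<delta>" "\<delta> < 1" and K: "K \<ge> 0"
    and init: "\<forall>x. \<delta> < w 0 x"
    and key: "\<forall>t>0. \<forall>x. (\<forall>y. w t x \<le> w t y) \<longrightarrow> 0 < w t x \<longrightarrow> w t x < 1 \<longrightarrow>
         (\<exists>D. ((\<lambda>s. w s x) has_field_derivative D) (at t) \<and> - K * w t x \<le> D)"
  shows "\<forall>t\<ge>0. \<forall>x. \<delta> * exp (-(K+1)*t) \<le> w t x"
proof (rule ccontr)
  define \<phi> where "\<phi> = (\<lambda>t::real. \<delta> * exp (-(K+1)*t))"
  define C where "C = cbox (0::real^'n) (\<chi> i. 1)"
  assume "\<not> ?thesis"
  then obtain t0 x0 where t0: "t0 \<ge> 0" and x0: "w t0 x0 < \<phi> t0" unfolding \<phi>_def by (meson not_le)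
  obtain x1 where x1: "x1 \<in> C" "w t0 x1 = w t0 x0" using per_cube per t0 unfolding C_def by blast
  define g where "g = (\<lambda>p::real \<times> (real^'n). w (fst p) (snd p) - \<phi> (fst p))"
  define P where "P = ({0..t0} \<times> C) \<inter> g -` {..0}"
  have contw: "continuous_on ({0..} \<times> UNIV) (\<lambda>p. w (fst p) (snd p))"
    using cont by (simp add: case_prod_beta')
  have contphi: "continuous_on A \<phi>" for A unfolding \<phi>_def by (intro continuous_intros)
  have contg: "continuous_on ({0..t0} \<times> C) g"
    unfolding g_def
    apply (intro continuous_intros)
     apply (rule continuous_on_subset[OF contw]) apply auto[1]
    apply (rule continuous_on_compose2[OF contphi]) by (auto intro: continuous_intros)
  have "closed P" unfolding P_def
    by (rule continuous_closed_preimage[OF contg]) (auto simp: C_def intro!: closed_Times)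
  hence "compact P" unfolding P_def
    using compact_Int_closed[of "{0..t0} \<times> C" P] 
    by (metis C_def P_def compact_Icc compact_Times compact_cbox inf.absorb2 inf_le1)
  moreover have "(t0, x1) \<in> P" unfolding P_def g_def using t0 x1 x0 by auto
  ultimately obtain p where pP: "p \<in> P" and pmin: "\<forall>q\<in>P. fst p \<le> fst q"
    using continuous_attains_inf[of P fst] continuous_on_fst[OF continuous_on_id] by force
  obtain ts xs where p: "p = (ts, xs)" by (cases p)
  have ts: "0 \<le> ts" "ts \<le> t0" and xs: "xs \<in> C" and le: "w ts xs \<le> \<phi> ts"
    using pP unfolding p P_def g_def by auto
  have contt: "continuous_on {0..} (\<lambda>s. w s y)" for y
    using continuous_on_compose2[OF cont, of "{0..}" "\<lambda>s. (s, y)"] by (force intro: continuous_intros)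
  have ts0: "ts > 0"
  proof -
    have "\<phi> 0 = \<delta>" unfolding \<phi>_def by simp
    then have "ts \<noteq> 0" using le init[rule_format, of xs] by (metis not_le)
    then show ?thesis using ts by simp
  qed
  have above: "\<phi> ts \<le> w ts y" for y
  proof (rule ccontr)
    assume "\<not> ?thesis"
    hence lt: "w ts y < \<phi> ts" by simp
    obtain y' where y': "y' \<in> C" "w ts y' = w ts y" using per_cube per ts unfolding C_def by blast
    have "continuous_on {0..ts} (\<lambda>s. w s y' - \<phi> s)"
      by (intro continuous_intros continuous_on_subset[OF contt] contphi) auto
    moreover have "(\<lambda>s. w s y' - \<phi> s) ts \<le> 0" using lt y' by simp
    moreover have "0 \<le> (\<lambda>s. w s y' - \<phi> s) 0" using init unfolding \<phi>_def by (simp add: less_imp_le)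
    ultimately obtain s where s: "0 \<le> s" "s \<le> ts" "w s y' - \<phi> s = 0"
      using IVT2'[of "\<lambda>s. w s y' - \<phi> s" ts 0 0] ts by auto
    have "s \<noteq> ts" using s lt y' by auto
    moreover have "(s, y') \<in> P" unfolding P_def g_def using s ts y' by auto
    ultimately show False using pmin s unfolding p by force
  qed
  have eq: "w ts xs = \<phi> ts" using le above[of xs] by simp
  have "0 \<le> (K+1)*ts" using ts K by simp
  hence "-(K+1)*ts \<le> 0" by (simp only: minus_mult_left neg_le_0_iff_le)
  hence ex1: "exp (-(K+1)*ts) \<le> 1" "0 < exp (-(K+1)*ts)" by auto
  have phipos: "0 < \<phi> ts" "\<phi> ts < 1"
  proof -
    show "0 < \<phi> ts" unfolding \<phi>_def using mult_pos_pos[OF d(1) ex1(2)] .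
    have "\<phi> ts \<le> \<delta>" unfolding \<phi>_def using mult_left_le[OF ex1(1), of \<delta>] d(1) by simp
    then show "\<phi> ts < 1" using d(2) by simp
  qed
  have gm: "\<And>y. w ts xs \<le> w ts y" using above eq by simp
  obtain D where D: "((\<lambda>s. w s xs) has_field_derivative D) (at ts)" "- K * w ts xs \<le> D"
    using key[rule_format, OF ts0 gm] eq phipos by auto
  have dphi: "(\<phi> has_field_derivative (- (K+1) * \<phi> ts)) (at ts)"
    unfolding \<phi>_def by (auto intro!: derivative_eq_intros)
  have dh: "((\<lambda>s. w s xs - \<phi> s) has_field_derivative D - (- (K+1) * \<phi> ts)) (at ts)"
    using D(1) dphi by (rule DERIV_diff)
  have "D + (K+1) * \<phi> ts \<ge> \<phi> ts" using D(2) eq by (simp add: algebra_simps)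
  hence "D - (- (K+1) * \<phi> ts) > 0" using phipos(1) by (simp add: algebra_simps)
  from DERIV_pos_inc_left[OF dh this] obtain e where e: "e > 0"
    "\<forall>h>0. h < e \<longrightarrow> w (ts - h) xs - \<phi> (ts - h) < w ts xs - \<phi> ts" by blast
  define h where "h = min (e/2) ts"
  have h: "h > 0" "h < e" "h \<le> ts" unfolding h_def using e ts0 by auto
  have "w (ts - h) xs - \<phi> (ts - h) < 0" using e(2)[rule_format, of h] h eq by simp
  hence "(ts - h, xs) \<in> P" unfolding P_def g_def using h ts xs by auto
  from pmin[rule_format, OF this] show False using h unfolding p by simp
qed



lemma prod_partial:
  fixes f G :: "real^'n \<Rightarrow> real"
  assumes hf: "has_partial i f x" and f0: "partial i f x = 0" and hG: "has_partial i G x"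
  shows "partial i (\<lambda>y. f y * (1 - f y) * G y) x = f x * (1 - f x) * partial i G x"
proof -
  have d1: "((\<lambda>s. f (x + s *\<^sub>R axis i 1)) has_field_derivative 0) (at 0)"
    using hp_real[OF hf] f0 by simp
  have d2: "((\<lambda>s. G (x + s *\<^sub>R axis i 1)) has_field_derivative partial i G x) (at 0)"
    using hp_real[OF hG] .
  have d3: "((\<lambda>s. 1 - f (x + s *\<^sub>R axis i 1)) has_field_derivative 0 - 0) (at 0)"
    by (rule DERIV_diff[OF DERIV_const d1])
  have d4: "((\<lambda>s. f (x + s *\<^sub>R axis i 1) * (1 - f (x + s *\<^sub>R axis i 1))) has_field_derivative
     0 * (1 - f (x + 0 *\<^sub>R axis i 1)) + (0 - 0) * f (x + 0 *\<^sub>R axis i 1)) (at 0)"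
    by (rule DERIV_mult[OF d1 d3])
  have d5: "((\<lambda>s. f (x + s *\<^sub>R axis i 1) * (1 - f (x + s *\<^sub>R axis i 1)) * G (x + s *\<^sub>R axis i 1)) has_field_derivative
     (0 * (1 - f (x + 0 *\<^sub>R axis i 1)) + (0 - 0) * f (x + 0 *\<^sub>R axis i 1)) * G (x + 0 *\<^sub>R axis i 1)
     + partial i G x * (f (x + 0 *\<^sub>R axis i 1) * (1 - f (x + 0 *\<^sub>R axis i 1)))) (at 0)"
    by (rule DERIV_mult[OF d4 d2])
  hence "((\<lambda>s. f (x + s *\<^sub>R axis i 1) * (1 - f (x + s *\<^sub>R axis i 1)) * G (x + s *\<^sub>R axis i 1)) has_vector_derivative
     f x * (1 - f x) * partial i G x) (at 0)"
    by (simp add: has_real_derivative_iff_has_vector_derivative mult.commute)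
  then show ?thesis unfolding partial_def by (rule vector_derivative_at)
qed

lemma comp_partial:
  fixes F :: "real^'n \<Rightarrow> real^'n"
  assumes "has_partial i F x"
  shows "has_partial i (\<lambda>y. F y $ j) x \<and> partial i (\<lambda>y. F y $ j) x = partial i F x $ j"
proof -
  have "((\<lambda>s. F (x + s *\<^sub>R axis i 1) $ j) has_vector_derivative partial i F x $ j) (at 0)"
    using bounded_linear.has_vector_derivative[OF bounded_linear_vec_nth hp_vd[OF assms]] .
  then show ?thesis unfolding has_partial_def partial_def
    using vector_derivative_at differentiableI_vector by blast
qed

lemma partial_per:
  assumes "torus_periodic g"
  shows "torus_periodic (partial i g)"
  unfolding torus_periodic_def
proof (intro allI)
  fix x j
  have "(\<lambda>s. g (x + axis j 1 + s *\<^sub>R axis i 1)) = (\<lambda>s. g (x + s *\<^sub>R axis i 1))"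
  proof
    fix s
    have "x + axis j 1 + s *\<^sub>R axis i 1 = (x + s *\<^sub>R axis i 1) + axis j 1" by (simp add: algebra_simps)
    then show "g (x + axis j 1 + s *\<^sub>R axis i 1) = g (x + s *\<^sub>R axis i 1)"
      using assms unfolding torus_periodic_def by metis
  qed
  then show "partial i g (x + axis j 1) = partial i g x" unfolding partial_def by simp
qed



lemma div_bound:
  fixes F :: "real^'n \<Rightarrow> real^'n"
  assumes sm: "smooth F" and pF: "torus_periodic F"
  shows "\<exists>K0\<ge>0. (\<forall>x. \<bar>\<Sum>i\<in>UNIV. partial i (\<lambda>y. F y $ i) x\<bar> \<le> K0)
             \<and> (\<forall>i x. has_partial i (\<lambda>y. F y $ i) x)"
proof -
  have hpF: "has_partial i F x" for i x
    using sm unfolding smooth_def by (metis iter_partial.simps(1))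
  have contF: "continuous_on UNIV (partial i F)" for i
    using sm unfolding smooth_def by (metis iter_partial.simps)
  define dv where "dv = (\<lambda>x. \<Sum>i\<in>UNIV. partial i F x $ i)"
  have dveq: "(\<Sum>i\<in>UNIV. partial i (\<lambda>y. F y $ i) x) = dv x" for x
    unfolding dv_def using comp_partial[OF hpF] by simp
  have cdv: "continuous_on UNIV dv" unfolding dv_def
    by (intro continuous_on_sum continuous_on_component contF)
  have pdv: "dv (x + axis j 1) = dv x" for x j
    unfolding dv_def using partial_per[OF pF] unfolding torus_periodic_def by simp
  hence tdv: "torus_periodic dv" unfolding torus_periodic_def by blast
  define C where "C = cbox (0::real^'n) (\<chi> i. 1)"
  have "compact (dv ` C)" unfolding C_def
    by (rule compact_continuous_image[OF continuous_on_subset[OF cdv]]) auto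
  then obtain B where B: "\<forall>z\<in>dv ` C. \<bar>z\<bar> \<le> B" using compact_imp_bounded bounded_real by metis
  have "\<bar>dv x\<bar> \<le> max B 0" for x
  proof -
    obtain y where "y \<in> C" "dv y = dv x" using per_cube[OF tdv] unfolding C_def by blast
    then show ?thesis using B by force
  qed
  then show ?thesis using dveq comp_partial[OF hpF]
    by (metis max.cobounded2)
qed



theorem lemmaB3:
  fixes F :: "real^'n \<Rightarrow> real^'n" and \<epsilon>0 T :: real
  assumes "smooth F" and "torus_periodic F"
    and "\<epsilon>0 > 0" and "T > 0"
  shows "\<exists>\<epsilon>1 > 0. \<forall>(u0 :: real^'n \<Rightarrow> real) (u :: real \<Rightarrow> real^'n \<Rightarrow> real).
           smooth u0 \<and> torus_periodic u0 \<and> (\<forall>x. u0 x \<in> {0..1})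
           \<and> (\<forall>x. \<epsilon>0 \<le> u0 x \<and> u0 x \<le> 1 - \<epsilon>0)
           \<and> classical_solution F u0 u
           \<longrightarrow> (\<forall>t\<in>{0..T}. \<forall>x. \<epsilon>1 \<le> u t x \<and> u t x \<le> 1 - \<epsilon>1)"
proof -
  obtain K0 where K0: "K0 \<ge> 0" "\<And>x. \<bar>\<Sum>i\<in>UNIV. partial i (\<lambda>y. F y $ i) x\<bar> \<le> K0"
    "\<And>i x. has_partial i (\<lambda>y. F y $ i) x"
    using div_bound[OF assms(1,2)] by blast
  define dv where "dv = (\<lambda>x. \<Sum>i\<in>UNIV. partial i (\<lambda>y. F y $ i) x)"
  define \<delta> where "\<delta> = \<epsilon>0 / 2"
  define L where "L = 2 * K0 + 1"
  define \<epsilon>1 where "\<epsilon>1 = \<delta> * exp (- L * T)"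
  have d0: "\<delta> > 0" unfolding \<delta>_def using assms(3) by simp
  have L0: "L > 0" unfolding L_def using K0(1) by simp
  show ?thesis
  proof (intro exI[of _ \<epsilon>1] conjI allI impI)
    show "\<epsilon>1 > 0" unfolding \<epsilon>1_def using d0 by simp
    fix u0 :: "real^'n \<Rightarrow> real" and u :: "real \<Rightarrow> real^'n \<Rightarrow> real"
    assume H: "smooth u0 \<and> torus_periodic u0 \<and> (\<forall>x. u0 x \<in> {0..1})
           \<and> (\<forall>x. \<epsilon>0 \<le> u0 x \<and> u0 x \<le> 1 - \<epsilon>0) \<and> classical_solution F u0 u"
    then have bnd: "\<And>x. \<epsilon>0 \<le> u0 x \<and> u0 x \<le> 1 - \<epsilon>0" and cs: "classical_solution F u0 u" by auto
    note c = cs[unfolded classical_solution_def]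
    have cont: "continuous_on ({0..} \<times> UNIV) (\<lambda>(t,x). u t x)" using c by blast
    have init: "\<And>x. u 0 x = u0 x" using c by blast
    have per: "\<forall>t\<ge>0. torus_periodic (u t)" using c by blast
    have dif: "\<And>t x. t > 0 \<Longrightarrow> (\<lambda>s. u s x) differentiable (at t)" using c by blast
    have hp: "\<And>t x i j. t > 0 \<Longrightarrow> has_partial i (u t) x \<and> has_partial j (partial i (u t)) x"
      using c by blast
    have eqn: "\<And>t x. t > 0 \<Longrightarrow> vector_derivative (\<lambda>s. u s x) (at t) =
          (\<Sum>i\<in>UNIV. partial i (partial i (u t)) x)
          - 2 * (\<Sum>i\<in>UNIV. partial i (\<lambda>y. u t y * (1 - u t y) * F y $ i) x)"
      using c by blast
    have d1: "\<delta> < 1" using bnd[of undefined] unfolding \<delta>_def by simp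
    have hder: "((\<lambda>s. u s x) has_field_derivative vector_derivative (\<lambda>s. u s x) (at t)) (at t)"
      if "t > 0" for t x
      using dif[OF that] vector_derivative_works has_real_derivative_iff_has_vector_derivative by blast
    have pde: "vector_derivative (\<lambda>s. u s x) (at t) =
          (\<Sum>i\<in>UNIV. partial i (partial i (u t)) x) - 2 * (u t x * (1 - u t x) * dv x)"
      if "t > 0" "\<And>i. partial i (u t) x = 0" for t x
    proof -
      have "(\<Sum>i\<in>UNIV. partial i (\<lambda>y. u t y * (1 - u t y) * F y $ i) x)
          = (\<Sum>i\<in>UNIV. u t x * (1 - u t x) * partial i (\<lambda>y. F y $ i) x)"
        using prod_partial[OF conjunct1[OF hp[OF that(1)]] that(2) K0(3)] by simp
      also have "\<dots> = u t x * (1 - u t x) * dv x" unfolding dv_def by (simp add: sum_distrib_left)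
      finally show ?thesis using eqn[OF that(1)] by simp
    qed
    have dvb: "\<And>x. - K0 \<le> dv x \<and> dv x \<le> K0" using K0(2) unfolding dv_def abs_le_iff by (meson minus_le_iff)
    have lower: "\<forall>t\<ge>0. \<forall>x. \<delta> * exp (-(2*K0+1)*t) \<le> u t x"
    proof (rule compare[OF cont per d0 d1])
      show "2 * K0 \<ge> 0" using K0(1) by simp
      show "\<forall>x. \<delta> < u 0 x"
      proof
        fix x show "\<delta> < u 0 x" using bnd[of x] init[of x] d0 unfolding \<delta>_def by linarith
      qed
      show "\<forall>t>0. \<forall>x. (\<forall>y. u t x \<le> u t y) \<longrightarrow> 0 < u t x \<longrightarrow> u t x < 1 \<longrightarrow>
         (\<exists>D. ((\<lambda>s. u s x) has_field_derivative D) (at t) \<and> - (2 * K0) * u t x \<le> D)"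
      proof (intro allI impI)
        fix t x assume t: "t > 0" and mn: "\<forall>y. u t x \<le> u t y" and u1: "0 < u t x" and u2: "u t x < 1"
        have p0: "\<And>i. partial i (u t) x = 0" using min_partial hp[OF t] mn by blast
        have s2: "\<And>i. partial i (partial i (u t)) x \<ge> 0"
          using min_partial2 hp[OF t] mn by blast
        have "(\<Sum>i\<in>UNIV. partial i (partial i (u t)) x) \<ge> 0" using s2 by (simp add: sum_nonneg)
        moreover have "u t x * (1 - u t x) * dv x \<le> u t x * (1 - u t x) * K0"
          using dvb[of x] u1 u2 by (intro mult_left_mono) auto
        moreover have "u t x * (1 - u t x) * K0 \<le> u t x * K0"
          using u1 u2 K0(1) by (intro mult_right_mono) (auto simp: mult_left_le)
        ultimately have "vector_derivative (\<lambda>s. u s x) (at t) \<ge> - (2 * K0) * u t x"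
          using pde[OF t p0] mult.commute[of "u t x" K0] by linarith
        then show "\<exists>D. ((\<lambda>s. u s x) has_field_derivative D) (at t) \<and> - (2 * K0) * u t x \<le> D"
          using hder[OF t] by blast
      qed
    qed
    have cont': "continuous_on ({0..} \<times> UNIV) (\<lambda>(t,x). 1 - u t x)"
    proof -
      have "(\<lambda>(t,x). 1 - u t x) = (\<lambda>p. 1 - (\<lambda>(t,x). u t x) p)" by auto
      then show ?thesis using cont by (simp add: continuous_on_diff)
    qed
    have per': "\<forall>t\<ge>0. torus_periodic (\<lambda>x. 1 - u t x)"
      using per unfolding torus_periodic_def by simp
    have upper: "\<forall>t\<ge>0. \<forall>x. \<delta> * exp (-(2*K0+1)*t) \<le> 1 - u t x"
    proof (rule compare[OF cont' per' d0 d1])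
      show "2 * K0 \<ge> 0" using K0(1) by simp
      show "\<forall>x. \<delta> < 1 - u 0 x"
      proof
        fix x show "\<delta> < 1 - u 0 x" using bnd[of x] init[of x] d0 unfolding \<delta>_def by linarith
      qed
      show "\<forall>t>0. \<forall>x. (\<forall>y. 1 - u t x \<le> 1 - u t y) \<longrightarrow> 0 < 1 - u t x \<longrightarrow> 1 - u t x < 1 \<longrightarrow>
         (\<exists>D. ((\<lambda>s. 1 - u s x) has_field_derivative D) (at t) \<and> - (2 * K0) * (1 - u t x) \<le> D)"
      proof (intro allI impI)
        fix t x assume t: "t > 0" and mx0: "\<forall>y. 1 - u t x \<le> 1 - u t y" and u1: "0 < 1 - u t x" and u2: "1 - u t x < 1"
        have mx: "\<forall>y. u t y \<le> u t x" using mx0 by simp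
        have p0: "\<And>i. partial i (u t) x = 0" using max_partial hp[OF t] mx by blast
        have s2: "\<And>i. partial i (partial i (u t)) x \<le> 0"
          using max_partial2 hp[OF t] mx by blast
        have f1: "(\<Sum>i\<in>UNIV. partial i (partial i (u t)) x) \<le> 0" using s2 by (simp add: sum_nonpos)
        have f2: "u t x * (1 - u t x) * (- K0) \<le> u t x * (1 - u t x) * dv x"
          using dvb[of x] u1 u2 by (intro mult_left_mono) auto
        have f3: "(1 - u t x) * u t x * K0 \<le> (1 - u t x) * K0"
          using u1 u2 K0(1) by (intro mult_right_mono) (auto simp: mult_left_le)
        have "vector_derivative (\<lambda>s. u s x) (at t) \<le> (2 * K0) * (1 - u t x)"
        proof -
          have q1: "u t x * (1 - u t x) * (- K0) = - ((1 - u t x) * u t x * K0)" by (simp add: algebra_simps)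
          have q2: "(2*K0)*(1-u t x) = 2*((1-u t x)*K0)" by simp
          show ?thesis using f1 f2 f3 pde[OF t p0] q1 q2 by linarith
        qed
        hence le2: "- (2 * K0) * (1 - u t x) \<le> 0 - vector_derivative (\<lambda>s. u s x) (at t)" by simp
        have "((\<lambda>s. 1 - u s x) has_field_derivative 0 - vector_derivative (\<lambda>s. u s x) (at t)) (at t)"
          by (rule DERIV_diff[OF DERIV_const hder[OF t]])
        then show "\<exists>D. ((\<lambda>s. 1 - u s x) has_field_derivative D) (at t) \<and> - (2 * K0) * (1 - u t x) \<le> D"
          using le2 by blast
      qed
    qed
    show "\<forall>t\<in>{0..T}. \<forall>x. \<epsilon>1 \<le> u t x \<and> u t x \<le> 1 - \<epsilon>1"
    proof (intro ballI allI)
      fix t x assume tT: "t \<in> {0..T}"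
      have "L * t \<le> L * T" using tT L0 by (intro mult_left_mono) auto
      hence "exp (- L * T) \<le> exp (- L * t)" by simp
      hence "\<delta> * exp (- L * T) \<le> \<delta> * exp (- L * t)" using d0 by (intro mult_left_mono) auto
      hence e: "\<epsilon>1 \<le> \<delta> * exp (-(2*K0+1)*t)" unfolding \<epsilon>1_def L_def by simp
      have t0: "0 \<le> t" using tT by simp
      show "\<epsilon>1 \<le> u t x \<and> u t x \<le> 1 - \<epsilon>1"
        using lower[rule_format, OF t0, of x] upper[rule_format, OF t0, of x] e by linarith
    qed
  qed
qed

end
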